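(* Let $\Psi$ be proper closed convex, $F=\frac1n\sum_{i=1}^nF_i$ with $F_i(x)=\mathbb{E}_{\xi_i\sim\mathcal{D}_i}[F_{\xi_i}(x)]$, and $x^*$ a solution of $\langle F(x^* ),x-x^*\rangle+\Psi(x)-\Psi(x^* )\ge0$ for all $x$. Let $K\ge0$, $\beta\in(0,1]$, $0<\gamma\le1/\ell$, $V\ge\|x^0-x^*\|^2+\frac{25600\gamma^2\ln^2\frac{48n(K+1)}{\beta}}{n^2}\sum_{i=1}^n\|F_i(x^* )\|^2$, $Q=B_{3\sqrt V}(x^* )$, and assume: $F$ is monotone on $Q$; for every solution $x^*$, $\|F_i(x)-F_i(x^* )\|^2\le\ell\langle F_i(x)-F_i(x^* ),x-x^*\rangle$ for $x\in Q$, $i\in[n]$; and $\|F(x)-F(y)\|^2\le\ell\langle F(x)-F(y),x-y\rangle$ for $x,y\in Q$. Consider DProx-clipped-SGDA-shift (arbitrary $h_i^0,\nu,\lambda_k$). If $x^k\in B_{3\sqrt V}(x^* )$ for all $k=0,1,\dots,K-1$, then for all $u\in B_{3\sqrt V}(x^* )$ $$\langle F(u),x^K_{\mathrm{avg}}-u\rangle+\Psi(x^K_{\mathrm{avg}})-\Psi(u)\le\frac{\|x^0-u\|^2-\|x^K-u\|^2}{2\gamma K}+\frac\gamma K\sum_{k=0}^{K-1}\|\omega_k\|^2+\frac1K\sum_{k=0}^{K-1}\langle x^k-u,\omega_k\rangle,$$ where $x^K_{\mathrm{avg}}=\frac1K\sum_{k=0}^{K-1}x^{k+1}$ and $\omega_k=F(x^k)-\tilde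 g^k$.
   Context: $\mathrm{prox}_{\gamma\Psi}(x)=\arg\min_y\{\gamma\Psi(y)+\frac12\|y-x\|^2\}$; $\mathrm{clip}(y,\lambda)=\min\{1,\lambda/\|y\|\}y$ ($\mathrm{clip}(0,\lambda)=0$). DProx-clipped-SGDA-shift: $x^{k+1}=\mathrm{prox}_{\gamma\Psi}(x^k-\gamma\tilde g^k)$, $\tilde g^k=\frac1n\sum_i\tilde g_i^k$, $\tilde g_i^k=h_i^k+\hat\Delta_i^k$, $h_i^{k+1}=h_i^k+\nu\hat\Delta_i^k$, $\hat\Delta_i^k=\mathrm{clip}(F_{\xi_i^k}(x^k)-h_i^k,\lambda_k)$, with $\xi_i^k$ sampled independently. *)

theory Defs
  imports "HOL-Probability.Probability"
begin

definition proper_closed_convex :: "('a::real_normed_vector \<Rightarrow> ereal) \<Rightarrow> bool" where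
  "proper_closed_convex \<Psi> \<longleftrightarrow>
     (\<forall>x. \<Psi> x \<noteq> -\<infinity>) \<and> (\<exists>x. \<Psi> x < \<infinity>) \<and>
     convex {(x, t::real). \<Psi> x \<le> ereal t} \<and>
     closed {(x, t::real). \<Psi> x \<le> ereal t}"

definition prox_set :: "real \<Rightarrow> ('a::real_normed_vector \<Rightarrow> ereal) \<Rightarrow> 'a \<Rightarrow> 'a set" where
  "prox_set \<gamma> \<Psi> z = {p. \<forall>y. ereal \<gamma> * \<Psi> p + ereal ((norm (p - z))\<^sup>2 / 2)
                             \<le> ereal \<gamma> * \<Psi> y + ereal ((norm (y - z))\<^sup>2 / 2)}"

definition clip :: "'a::real_normed_vector \<Rightarrow> real \<Rightarrow> 'a" where
  "clip y r = (if y = 0 then 0 else min 1 (r / norm y) *\<^sub>R y)"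

definition is_solution :: "('a::real_inner \<Rightarrow> 'a) \<Rightarrow> ('a \<Rightarrow> ereal) \<Rightarrow> 'a \<Rightarrow> bool" where
  "is_solution F \<Psi> xs \<longleftrightarrow> \<Psi> xs < \<infinity> \<and>
     (\<forall>x. ereal (inner (F xs) (x - xs)) + \<Psi> x - \<Psi> xs \<ge> 0)"

end

theory Submission
  imports Defs
begin

lemma epi_conv:
  fixes \<Psi> :: "'a::real_normed_vector \<Rightarrow> ereal"
  assumes c: "convex {(x, t::real). \<Psi> x \<le> ereal t}"
    and a: "\<Psi> a \<le> ereal s" and b: "\<Psi> b \<le> ereal t" and th: "0 \<le> \<theta>" "\<theta> \<le> 1"
  shows "\<Psi> ((1-\<theta>) *\<^sub>R a + \<theta> *\<^sub>R b) \<le> ereal ((1 - \<theta>) * s + \<theta> * t)"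
proof -
  have "(1-\<theta>) *\<^sub>R (a,s) + \<theta> *\<^sub>R (b,t) \<in> {(x, t::real). \<Psi> x \<le> ereal t}"
    by (rule convexD[OF c]) (use a b th in auto)
  then show ?thesis by simp
qed

lemma eps_le:
  fixes A B C :: real
  assumes "C \<ge> 0" "\<And>t. 0 < t \<Longrightarrow> t \<le> 1 \<Longrightarrow> A \<le> B + t * C"
  shows "A \<le> B"
proof (rule ccontr)
  assume "\<not> A \<le> B"
  define t where "t = min 1 ((A - B)/(C+1))"
  have t0: "0 < t" "t \<le> 1" using \<open>\<not> A \<le> B\<close> assms(1) by (auto simp: t_def)
  have "t * C \<le> (A-B)/(C+1) * C" using t0 assms(1) by (intro mult_right_mono) (auto simp: t_def)
  also have "\<dots> < A - B" using \<open>\<not> A \<le> B\<close> assms(1) by (simp add: field_simps)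
  finally show False using assms(2)[OF t0] by linarith
qed

lemma prox_ineq:
  fixes \<Psi> :: "'a::real_inner \<Rightarrow> ereal"
  assumes c: "convex {(x, t::real). \<Psi> x \<le> ereal t}"
    and g: "\<gamma> > 0" and p: "p \<in> prox_set \<gamma> \<Psi> z"
    and pf: "\<Psi> p = ereal pp" and yf: "\<Psi> y = ereal yy"
  shows "\<gamma> * (pp - yy) \<le> inner (p - z) (y - p)"
proof (rule eps_le)
  show "0 \<le> (norm (y - p))\<^sup>2 / 2" by simp
  fix t :: real assume t: "0 < t" "t \<le> 1"
  define w where "w = (1-t) *\<^sub>R p + t *\<^sub>R y"
  have pw: "\<Psi> w \<le> ereal ((1-t)*pp + t*yy)" unfolding w_def
    by (rule epi_conv[OF c]) (use pf yf t in auto)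
  have "ereal \<gamma> * \<Psi> p + ereal ((norm (p - z))\<^sup>2 / 2) \<le> ereal \<gamma> * \<Psi> w + ereal ((norm (w - z))\<^sup>2 / 2)"
    using p unfolding prox_set_def by blast
  also have "\<dots> \<le> ereal \<gamma> * ereal ((1-t)*pp + t*yy) + ereal ((norm (w - z))\<^sup>2 / 2)"
    using pw g by (intro add_right_mono ereal_mult_left_mono) auto
  finally have "\<gamma> * pp + (norm (p - z))\<^sup>2 / 2 \<le> \<gamma> * ((1-t)*pp + t*yy) + (norm (w - z))\<^sup>2 / 2"
    using pf by simp
  moreover have eq: "w - z = (p - z) + t *\<^sub>R (y - p)" by (simp add: w_def algebra_simps)
  have "(norm (w - z))\<^sup>2 = (norm (p-z))\<^sup>2 + 2 * t * inner (p - z) (y - p) + t\<^sup>2 * (norm (y-p))\<^sup>2"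
    unfolding eq power2_norm_eq_inner by (simp add: inner_add_left inner_add_right power2_eq_square algebra_simps inner_commute)
  ultimately have "t * (\<gamma> * (pp - yy)) \<le> t * (inner (p - z) (y - p) + t * ((norm (y - p))\<^sup>2 / 2))"
    by (simp add: algebra_simps power2_eq_square)
  thus "\<gamma> * (pp - yy) \<le> inner (p - z) (y - p) + t * ((norm (y - p))\<^sup>2 / 2)"
    using t by simp
qed



lemma real_alg:
  fixes g P Fe Fd ae ad we wd ww wa aa de dd ee :: real
  assumes h1: "g\<^sup>2*aa \<le> g*ae"
   and h2: "0 \<le> g\<^sup>2*ww - 2*g\<^sup>2*wa + g\<^sup>2*aa - 2*g*wd + 2*g*ad + dd"
   and h3: "0 \<le> g\<^sup>2*ww + 2*g\<^sup>2*wa + g\<^sup>2*aa"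
   and pr: "g*P \<le> -de - dd - g*Fe - g*Fd + g*we + g*wd"
  shows "g*(Fe + Fd - ae - ad) + g*P \<le> (ee - (ee + 2*de + dd))/2 + g*we + g\<^sup>2*ww"
  using assms by (simp add: algebra_simps field_simps)

lemma step_alg:
  fixes d e a w Fx :: "'a::real_inner"
  assumes coco: "(norm a)\<^sup>2 \<le> L * inner a e" and L: "L > 0" and g: "\<gamma> > 0" "\<gamma> \<le> 1 / L"
    and pr: "\<gamma> * P \<le> inner (d + \<gamma> *\<^sub>R (Fx - w)) (- (e + d))"
  shows "\<gamma> * inner (Fx - a) (e + d) + \<gamma> * P
     \<le> ((norm e)\<^sup>2 - (norm (e + d))\<^sup>2) / 2 + \<gamma> * inner e w + \<gamma>\<^sup>2 * (norm w)\<^sup>2"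
proof -
  have gL: "\<gamma> * L \<le> 1" using g L by (simp add: field_simps)
  have ae: "inner a e \<ge> 0" using coco L
    by (metis le_less_trans linorder_not_le mult_pos_neg zero_le_power2)
  have h1: "\<gamma>\<^sup>2 * inner a a \<le> \<gamma> * inner a e"
  proof -
    have "\<gamma>\<^sup>2 * (norm a)\<^sup>2 \<le> \<gamma>\<^sup>2 * (L * inner a e)" using coco g by simp
    also have "\<dots> = \<gamma> * (\<gamma> * L) * inner a e" by (simp add: power2_eq_square)
    also have "\<dots> \<le> \<gamma> * 1 * inner a e" using gL g ae
      by (intro mult_right_mono mult_left_mono) auto
    finally show ?thesis by (simp add: power2_norm_eq_inner)
  qed
  have h2: "0 \<le> inner (\<gamma> *\<^sub>R (w - a) - d) (\<gamma> *\<^sub>R (w - a) - d)" by simp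
  have h2': "inner (\<gamma> *\<^sub>R (w - a) - d) (\<gamma> *\<^sub>R (w - a) - d) =
     \<gamma>\<^sup>2*inner w w - 2*\<gamma>\<^sup>2*inner w a + \<gamma>\<^sup>2*inner a a - 2*\<gamma>*inner w d + 2*\<gamma>*inner a d + inner d d"
    by (simp add: inner_diff_left inner_diff_right inner_commute power2_eq_square algebra_simps)
  have h3: "0 \<le> \<gamma>\<^sup>2 * inner (w + a) (w + a)" by simp
  have h3': "\<gamma>\<^sup>2 * inner (w + a) (w + a) = \<gamma>\<^sup>2*inner w w + 2*\<gamma>\<^sup>2*inner w a + \<gamma>\<^sup>2*inner a a"
    by (simp add: inner_add_left inner_add_right inner_commute algebra_simps)
  have pr': "inner (d + \<gamma> *\<^sub>R (Fx - w)) (- (e + d)) =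
     - inner d e - inner d d - \<gamma>*inner Fx e - \<gamma>*inner Fx d + \<gamma>*inner w e + \<gamma>*inner w d"
    by (simp add: inner_add_left inner_add_right inner_diff_left inner_diff_right algebra_simps)
  have l': "\<gamma> * inner (Fx - a) (e + d) = \<gamma> * (inner Fx e + inner Fx d - inner a e - inner a d)"
    by (simp add: inner_add_left inner_add_right inner_diff_left inner_diff_right algebra_simps)
  have r': "(norm (e + d))\<^sup>2 = inner e e + 2 * inner d e + inner d d"
    unfolding power2_norm_eq_inner by (simp add: inner_add_left inner_add_right inner_commute)
  have r2: "(norm e)\<^sup>2 = inner e e" "(norm w)\<^sup>2 = inner w w" by (simp_all add: power2_norm_eq_inner)
  show ?thesis unfolding l' r' r2 inner_commute[of e w]
    by (rule real_alg[OF h1 h2[unfolded h2'] h3[unfolded h3'] pr[unfolded pr']])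
qed


theorem lemmaG1:
  fixes \<Psi> :: "'a::euclidean_space \<Rightarrow> ereal"
    and n :: nat and F :: "'a \<Rightarrow> 'a" and Fi :: "nat \<Rightarrow> 'a \<Rightarrow> 'a"
    and D :: "nat \<Rightarrow> 'b measure" and Fxi :: "'b \<Rightarrow> 'a \<Rightarrow> 'a"
    and xs :: 'a and K :: nat and \<beta> \<gamma> L V \<nu> :: real and lam :: "nat \<Rightarrow> real"
    and x :: "nat \<Rightarrow> 'a" and h :: "nat \<Rightarrow> nat \<Rightarrow> 'a" and xi :: "nat \<Rightarrow> nat \<Rightarrow> 'b"
  assumes psi: "proper_closed_convex \<Psi>"
    and n_pos: "n \<ge> 1"
    and F_def: "\<And>z. F z = (1 / real n) *\<^sub>R (\<Sum>i<n. Fi i z)"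
    and D_prob: "\<And>i. i < n \<Longrightarrow> prob_space (D i)"
    and Fi_def: "\<And>i z. i < n \<Longrightarrow> Fi i z = integral\<^sup>L (D i) (\<lambda>\<xi>. Fxi \<xi> z)"
    and xs_sol: "is_solution F \<Psi> xs"
    and K_pos: "K \<ge> 1"
    and beta: "0 < \<beta>" "\<beta> \<le> 1"
    and ell_pos: "L > 0"
    and gamma: "0 < \<gamma>" "\<gamma> \<le> 1 / L"
    and V: "V \<ge> (norm (x 0 - xs))\<^sup>2
              + 25600 * \<gamma>\<^sup>2 * (ln (48 * real n * (real K + 1) / \<beta>))\<^sup>2 / (real n)\<^sup>2
                * (\<Sum>i<n. (norm (Fi i xs))\<^sup>2)"
    and mono: "\<forall>z\<in>cball xs (3 * sqrt V). \<forall>y\<in>cball xs (3 * sqrt V).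
                 inner (F z - F y) (z - y) \<ge> 0"
    and star_coco: "\<forall>xs'. is_solution F \<Psi> xs' \<longrightarrow>
                 (\<forall>z\<in>cball xs (3 * sqrt V). \<forall>i<n.
                    (norm (Fi i z - Fi i xs'))\<^sup>2 \<le> L * inner (Fi i z - Fi i xs') (z - xs'))"
    and coco: "\<forall>z\<in>cball xs (3 * sqrt V). \<forall>y\<in>cball xs (3 * sqrt V).
                 (norm (F z - F y))\<^sup>2 \<le> L * inner (F z - F y) (z - y)"
    and h_step: "\<And>i k. i < n \<Longrightarrow>
                 h i (Suc k) = h i k + \<nu> *\<^sub>R clip (Fxi (xi i k) (x k) - h i k) (lam k)"
    and x_step: "\<And>k. x (Suc k) \<in> prox_set \<gamma> \<Psi>
                 (x k - \<gamma> *\<^sub>R ((1 / real n) *\<^sub>R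
                   (\<Sum>i<n. h i k + clip (Fxi (xi i k) (x k) - h i k) (lam k))))"
    and x_in: "\<forall>k<K. x k \<in> cball xs (3 * sqrt V)"
  shows "\<forall>u\<in>cball xs (3 * sqrt V).
    (let g = (\<lambda>k. (1 / real n) *\<^sub>R
                   (\<Sum>i<n. h i k + clip (Fxi (xi i k) (x k) - h i k) (lam k)));
         \<omega> = (\<lambda>k. F (x k) - g k);
         xavg = (1 / real K) *\<^sub>R (\<Sum>k<K. x (Suc k))
     in ereal (inner (F u) (xavg - u)) + \<Psi> xavg - \<Psi> u
        \<le> ereal (((norm (x 0 - u))\<^sup>2 - (norm (x K - u))\<^sup>2) / (2 * \<gamma> * real K)
                 + \<gamma> / real K * (\<Sum>k<K. (norm (\<omega> k))\<^sup>2)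
                 + 1 / real K * (\<Sum>k<K. inner (x k - u) (\<omega> k))))"
  proof (intro ballI)
  fix u assume uQ: "u \<in> cball xs (3 * sqrt V)"
  define g where "g = (\<lambda>k. (1 / real n) *\<^sub>R
                   (\<Sum>i<n. h i k + clip (Fxi (xi i k) (x k) - h i k) (lam k)))"
  define \<omega> where "\<omega> = (\<lambda>k. F (x k) - g k)"
  define xavg where "xavg = (1 / real K) *\<^sub>R (\<Sum>k<K. x (Suc k))"
  define \<psi> where "\<psi> = (\<lambda>v. real_of_ereal (\<Psi> v))"
  note pcc = psi[unfolded proper_closed_convex_def]
  have ninf: "\<And>v. \<Psi> v \<noteq> -\<infinity>" using pcc by (elim conjE) (rule spec)
  obtain y0 where y0: "\<Psi> y0 < \<infinity>" using pcc by (elim conjE exE)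
  have cvx: "convex {(x, t::real). \<Psi> x \<le> ereal t}" using pcc by (elim conjE)
  have fin: "\<Psi> v = ereal (\<psi> v)" if "\<Psi> v \<noteq> \<infinity>" for v
    using ninf[of v] that unfolding \<psi>_def by (cases "\<Psi> v") auto
  have xs_step: "\<And>k. x (Suc k) \<in> prox_set \<gamma> \<Psi> (x k - \<gamma> *\<^sub>R g k)"
    using x_step unfolding g_def by simp
  have finx: "\<And>k. \<Psi> (x (Suc k)) = ereal (\<psi> (x (Suc k)))"
  proof -
    fix k
    have le: "ereal \<gamma> * \<Psi> (x (Suc k)) + ereal ((norm (x (Suc k) - (x k - \<gamma> *\<^sub>R g k)))\<^sup>2 / 2)
        \<le> ereal \<gamma> * \<Psi> y0 + ereal ((norm (y0 - (x k - \<gamma> *\<^sub>R g k)))\<^sup>2 / 2)"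
      using xs_step[of k] unfolding prox_set_def by blast
    have "ereal \<gamma> * \<Psi> y0 + ereal ((norm (y0 - (x k - \<gamma> *\<^sub>R g k)))\<^sup>2 / 2) \<noteq> \<infinity>"
      using y0 ninf[of y0] gamma(1) by (cases "\<Psi> y0") auto
    hence "\<Psi> (x (Suc k)) \<noteq> \<infinity>" using le gamma(1) by auto
    thus "\<Psi> (x (Suc k)) = ereal (\<psi> (x (Suc k)))" by (rule fin)
  qed
  have Kpos: "real K > 0" using K_pos by simp
  have "(\<Sum>k<K. (1 / real K) *\<^sub>R (x (Suc k), \<psi> (x (Suc k)))) \<in> {(x, t::real). \<Psi> x \<le> ereal t}"
    by (rule convex_sum[OF _ cvx]) (use Kpos finx in auto)
  moreover have "(\<Sum>k<K. (1 / real K) *\<^sub>R (x (Suc k), \<psi> (x (Suc k))))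
      = (xavg, (1 / real K) * (\<Sum>k<K. \<psi> (x (Suc k))))"
    by (simp add: prod_eq_iff fst_sum snd_sum xavg_def scaleR_sum_right sum_distrib_left)
  ultimately have jen: "\<Psi> xavg \<le> ereal ((1 / real K) * (\<Sum>k<K. \<psi> (x (Suc k))))" by simp
  hence "\<Psi> xavg \<noteq> \<infinity>" by auto
  hence finavg: "\<Psi> xavg = ereal (\<psi> xavg)" by (rule fin)
  have jen': "\<psi> xavg \<le> (1 / real K) * (\<Sum>k<K. \<psi> (x (Suc k)))" using jen finavg by simp
  define R where "R = ((norm (x 0 - u))\<^sup>2 - (norm (x K - u))\<^sup>2) / (2 * \<gamma> * real K)
                 + \<gamma> / real K * (\<Sum>k<K. (norm (\<omega> k))\<^sup>2)
                 + 1 / real K * (\<Sum>k<K. inner (x k - u) (\<omega> k))"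
  have main: "ereal (inner (F u) (xavg - u)) + \<Psi> xavg - \<Psi> u \<le> ereal R"
  proof (cases "\<Psi> u = \<infinity>")
    case True
    then show ?thesis using finavg by simp
  next
    case False
    hence finu: "\<Psi> u = ereal (\<psi> u)" by (rule fin)
    have step: "inner (F u) (x (Suc k) - u) + (\<psi> (x (Suc k)) - \<psi> u)
       \<le> ((norm (x k - u))\<^sup>2 - (norm (x (Suc k) - u))\<^sup>2) / (2 * \<gamma>)
          + inner (x k - u) (\<omega> k) + \<gamma> * (norm (\<omega> k))\<^sup>2" if k: "k < K" for k
    proof -
      have pr: "\<gamma> * (\<psi> (x (Suc k)) - \<psi> u) \<le> inner (x (Suc k) - (x k - \<gamma> *\<^sub>R g k)) (u - x (Suc k))"
        by (rule prox_ineq[OF cvx gamma(1) xs_step finx finu])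
      have xk: "x k \<in> cball xs (3 * sqrt V)" using x_in k by blast
      have cc: "(norm (F (x k) - F u))\<^sup>2 \<le> L * inner (F (x k) - F u) (x k - u)"
        using coco xk uQ by blast
      have e1: "x (Suc k) - (x k - \<gamma> *\<^sub>R g k) = (x (Suc k) - x k) + \<gamma> *\<^sub>R (F (x k) - \<omega> k)"
        by (simp add: \<omega>_def)
      have e2: "u - x (Suc k) = - ((x k - u) + (x (Suc k) - x k))" by simp
      have A: "\<gamma> * inner (F (x k) - (F (x k) - F u)) ((x k - u) + (x (Suc k) - x k)) + \<gamma> * (\<psi> (x (Suc k)) - \<psi> u)
         \<le> ((norm (x k - u))\<^sup>2 - (norm ((x k - u) + (x (Suc k) - x k)))\<^sup>2) / 2
            + \<gamma> * inner (x k - u) (\<omega> k) + \<gamma>\<^sup>2 * (norm (\<omega> k))\<^sup>2"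
        by (rule step_alg[OF cc ell_pos gamma pr[unfolded e1 e2]])
      have A': "\<gamma> * (inner (F u) (x (Suc k) - u) + (\<psi> (x (Suc k)) - \<psi> u))
         \<le> \<gamma> * (((norm (x k - u))\<^sup>2 - (norm (x (Suc k) - u))\<^sup>2) / (2 * \<gamma>)
            + inner (x k - u) (\<omega> k) + \<gamma> * (norm (\<omega> k))\<^sup>2)"
      proof -
        have f1: "F (x k) - (F (x k) - F u) = F u" "(x k - u) + (x (Suc k) - x k) = x (Suc k) - u" by simp_all
        have f2: "\<gamma> * (((norm (x k - u))\<^sup>2 - (norm (x (Suc k) - u))\<^sup>2) / (2 * \<gamma>)
            + inner (x k - u) (\<omega> k) + \<gamma> * (norm (\<omega> k))\<^sup>2)
          = ((norm (x k - u))\<^sup>2 - (norm (x (Suc k) - u))\<^sup>2) / 2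
            + \<gamma> * inner (x k - u) (\<omega> k) + \<gamma>\<^sup>2 * (norm (\<omega> k))\<^sup>2"
          using gamma(1) by (simp add: field_simps power2_eq_square)
        show ?thesis unfolding f2 using A[unfolded f1] by (simp add: ring_distribs power2_eq_square)
      qed
      show ?thesis using A' gamma(1) by (meson mult_le_cancel_left_pos)
    qed
    have S: "(\<Sum>k<K. inner (F u) (x (Suc k) - u) + (\<psi> (x (Suc k)) - \<psi> u))
       \<le> (\<Sum>k<K. ((norm (x k - u))\<^sup>2 - (norm (x (Suc k) - u))\<^sup>2) / (2 * \<gamma>)
          + inner (x k - u) (\<omega> k) + \<gamma> * (norm (\<omega> k))\<^sup>2)"
      by (rule sum_mono) (use step in auto)
    have S1: "(\<Sum>k<K. inner (F u) (x (Suc k) - u) + (\<psi> (x (Suc k)) - \<psi> u))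
       = real K * inner (F u) (xavg - u) + (\<Sum>k<K. \<psi> (x (Suc k))) - real K * \<psi> u"
    proof -
      have "real K *\<^sub>R (xavg - u) = (\<Sum>k<K. x (Suc k) - u)"
        using Kpos by (simp add: xavg_def sum_subtractf scaleR_diff_right sum_constant_scaleR)
      hence "real K * inner (F u) (xavg - u) = (\<Sum>k<K. inner (F u) (x (Suc k) - u))"
        by (metis inner_scaleR_right inner_sum_right)
      thus ?thesis by (simp add: sum.distrib sum_subtractf)
    qed
    have S2: "(\<Sum>k<K. ((norm (x k - u))\<^sup>2 - (norm (x (Suc k) - u))\<^sup>2) / (2 * \<gamma>)
          + inner (x k - u) (\<omega> k) + \<gamma> * (norm (\<omega> k))\<^sup>2)
       = ((norm (x 0 - u))\<^sup>2 - (norm (x K - u))\<^sup>2) / (2 * \<gamma>)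
          + (\<Sum>k<K. inner (x k - u) (\<omega> k)) + \<gamma> * (\<Sum>k<K. (norm (\<omega> k))\<^sup>2)"
      by (simp add: sum.distrib sum_divide_distrib[symmetric] sum_distrib_left
            sum_lessThan_telescope'[of "\<lambda>k. (norm (x k - u))\<^sup>2"])
    have T: "real K * inner (F u) (xavg - u) + (\<Sum>k<K. \<psi> (x (Suc k))) - real K * \<psi> u
       \<le> real K * R"
    proof -
      have "real K * R = ((norm (x 0 - u))\<^sup>2 - (norm (x K - u))\<^sup>2) / (2 * \<gamma>)
          + (\<Sum>k<K. inner (x k - u) (\<omega> k)) + \<gamma> * (\<Sum>k<K. (norm (\<omega> k))\<^sup>2)"
        unfolding R_def using Kpos gamma(1) by (simp add: field_simps)
      thus ?thesis using S unfolding S1 S2 by simp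
    qed
    have "real K * \<psi> xavg \<le> (\<Sum>k<K. \<psi> (x (Suc k)))"
      using jen' Kpos by (simp add: field_simps)
    hence "real K * (inner (F u) (xavg - u) + \<psi> xavg - \<psi> u) \<le> real K * R"
      using T by (simp add: algebra_simps)
    hence "inner (F u) (xavg - u) + \<psi> xavg - \<psi> u \<le> R" using Kpos by simp
    thus ?thesis using finavg finu by simp
  qed
  show "(let g = (\<lambda>k. (1 / real n) *\<^sub>R
                   (\<Sum>i<n. h i k + clip (Fxi (xi i k) (x k) - h i k) (lam k)));
         \<omega> = (\<lambda>k. F (x k) - g k);
         xavg = (1 / real K) *\<^sub>R (\<Sum>k<K. x (Suc k))
     in ereal (inner (F u) (xavg - u)) + \<Psi> xavg - \<Psi> u
        \<le> ereal (((norm (x 0 - u))\<^sup>2 - (norm (x K - u))\<^sup>2) / (2 * \<gamma> * real K)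
                 + \<gamma> / real K * (\<Sum>k<K. (norm (\<omega> k))\<^sup>2)
                 + 1 / real K * (\<Sum>k<K. inner (x k - u) (\<omega> k))))"
    using main unfolding Let_def R_def xavg_def \<omega>_def g_def .
qed

end
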